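(* Let $\mathbb{K}$ be a field of characteristic $2$, let $A$ be an associative commutative $\mathbb{K}$-algebra, and let $(A[[t]],\mu_t)$, $\mu_t(a,b)=ab+\sum_{i\ge1}t^i\mu_i(a,b)$, be a formal deformation of $A$ such that $\mu_1(a^2,b)=0$ and $\mu_2^-(a^2,b)=0$ for all $a,b\in A$. Then $(A,\cdot,\mu_1^-,\omega_{\mu_1})$ is a restricted Poisson algebra.
   Context: A formal deformation of $A$ is an associative $\mathbb{K}[[t]]$-bilinear product $\mu_t$ on $A[[t]]$ of the stated form with $\mu_i:A\times A\to A$ bilinear. For bilinear $\mu$: $\mu^-(a,b)=\mu(a,b)-\mu(b,a)$ and $\omega_\mu(a)=\mu(a,a)$. A restricted Poisson algebra (characteristic 2) is a commutative associative algebra $(A,\cdot)$ with a Lie bracket $\{,\}$ satisfying $\{ab,c\}=a\{b,c\}+b\{a,c\}$, and a map $(-)^{\{2\}}$ with $(\lambda x)^{\{2\}}=\lambda^2x^{\{2\}}$, $\mathrm{ad}_{x^{\{2\}}}=\mathrm{ad}_x^2$, $(x+y)^{\{2\}}=x^{\{2\}}+y^{\{2\}}+\{x,y\}$, and $(xy)^{\{2\}}=x^2y^{\{2\}}+y^2x^{\{2\}}+xy\{x,y\}$. *)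

theory Defs
  imports Complex_Main
begin

text \<open>A commutative associative K-algebra A is modelled by a type 'a of class comm_ring
  (commutative, associative, not necessarily unital) together with a scalar multiplication
  sc :: 'k \<Rightarrow> 'a \<Rightarrow> 'a over a field 'k making A a K-module and compatible with the product.\<close>

definition k_algebra :: "('k::field \<Rightarrow> 'a::comm_ring \<Rightarrow> 'a) \<Rightarrow> bool" where
  "k_algebra sc \<longleftrightarrow> module sc \<and>
     (\<forall>c x y. sc c (x * y) = sc c x * y \<and> sc c (x * y) = x * sc c y)"

definition bilinear_map :: "('k::field \<Rightarrow> 'a::comm_ring \<Rightarrow> 'a) \<Rightarrow> ('a \<Rightarrow> 'a \<Rightarrow> 'a) \<Rightarrow> bool" where
  "bilinear_map sc f \<longleftrightarrow>
     (\<forall>x y z. f (x + y) z = f x z + f y z) \<and>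
     (\<forall>x y z. f x (y + z) = f x y + f x z) \<and>
     (\<forall>c x y. f (sc c x) y = sc c (f x y)) \<and>
     (\<forall>c x y. f x (sc c y) = sc c (f x y))"

text \<open>Formal deformation: mu_t = sum_i t^i mu_i with mu_0 the product of A, each mu_i
  bilinear, and mu_t associative on A[[t]]. Since mu_t is the K[[t]]-bilinear extension,
  associativity is equivalent to the vanishing of every t^n coefficient of
  mu_t(mu_t(a,b),c) - mu_t(a,mu_t(b,c)) for a,b,c in A.\<close>
definition formal_deformation ::
    "('k::field \<Rightarrow> 'a::comm_ring \<Rightarrow> 'a) \<Rightarrow> (nat \<Rightarrow> 'a \<Rightarrow> 'a \<Rightarrow> 'a) \<Rightarrow> bool" where
  "formal_deformation sc \<mu> \<longleftrightarrow>
     (\<forall>a b. \<mu> 0 a b = a * b) \<and>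
     (\<forall>i. bilinear_map sc (\<mu> i)) \<and>
     (\<forall>n a b c. (\<Sum>i\<le>n. \<mu> i (\<mu> (n - i) a b) c) = (\<Sum>i\<le>n. \<mu> i a (\<mu> (n - i) b c)))"

definition antisymmetrization :: "('a::ab_group_add \<Rightarrow> 'a \<Rightarrow> 'a) \<Rightarrow> 'a \<Rightarrow> 'a \<Rightarrow> 'a" where
  "antisymmetrization m a b = m a b - m b a"

definition omega_of :: "('a \<Rightarrow> 'a \<Rightarrow> 'a) \<Rightarrow> 'a \<Rightarrow> 'a" where
  "omega_of m a = m a a"

definition lie_bracket :: "('k::field \<Rightarrow> 'a::comm_ring \<Rightarrow> 'a) \<Rightarrow> ('a \<Rightarrow> 'a \<Rightarrow> 'a) \<Rightarrow> bool" where
  "lie_bracket sc br \<longleftrightarrow> bilinear_map sc br \<and> (\<forall>x. br x x = 0) \<and>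
     (\<forall>x y z. br x (br y z) + br y (br z x) + br z (br x y) = 0)"

definition restricted_poisson ::
    "('k::field \<Rightarrow> 'a::comm_ring \<Rightarrow> 'a) \<Rightarrow> ('a \<Rightarrow> 'a \<Rightarrow> 'a) \<Rightarrow> ('a \<Rightarrow> 'a) \<Rightarrow> bool" where
  "restricted_poisson sc br sq \<longleftrightarrow>
     k_algebra sc \<and> lie_bracket sc br \<and>
     (\<forall>a b c. br (a * b) c = a * br b c + b * br a c) \<and>
     (\<forall>c x. sq (sc c x) = sc (c^2) (sq x)) \<and>
     (\<forall>x y. br (sq x) y = br x (br x y)) \<and>
     (\<forall>x y. sq (x + y) = sq x + sq y + br x y) \<and>
     (\<forall>x y. sq (x * y) = (x * x) * sq y + (y * y) * sq x + (x * y) * br x y)"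

end

theory Submission
  imports Defs
begin

theorem mainTheorem13:
  fixes sc :: "'k::field \<Rightarrow> 'a::comm_ring \<Rightarrow> 'a"
    and \<mu> :: "nat \<Rightarrow> 'a \<Rightarrow> 'a \<Rightarrow> 'a"
  assumes "CHAR('k) = 2"
    and "k_algebra sc"
    and "formal_deformation sc \<mu>"
    and "\<forall>a b. \<mu> 1 (a * a) b = 0"
    and "\<forall>a b. antisymmetrization (\<mu> 2) (a * a) b = 0"
  shows "restricted_poisson sc (antisymmetrization (\<mu> 1)) (omega_of (\<mu> 1))"
proof -
  have md: "module sc" using assms(2) by (simp add: k_algebra_def)
  have two: "(1::'k) + 1 = 0"
    using of_nat_CHAR[where 'a='k] assms(1) by simp
  have c2: "\<And>x::'a. x + x = 0"
    by (metis module.scale_left_distrib[OF md] module.scale_one[OF md] two module.scale_zero_left[OF md])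
  have c2b: "\<And>x y::'a. x + (x + y) = y" by (simp add: add.assoc[symmetric] c2)
  have neg: "\<And>x::'a. - x = x" using c2 by (metis eq_neg_iff_add_eq_0)
  have dif: "\<And>x y::'a. x - y = x + y" by (simp add: neg)
  have fin: "\<And>x y::'a. x + y = 0 \<Longrightarrow> x = y" by (metis c2b add_0_right)
  have toz: "\<And>x y::'a. x = y \<Longrightarrow> x + y = 0" by (simp add: c2)
  have m0: "\<And>a b. \<mu> 0 a b = a * b" using assms(3) by (simp add: formal_deformation_def)
  have bil: "\<And>i. bilinear_map sc (\<mu> i)" using assms(3) by (simp add: formal_deformation_def)
  have addL: "\<And>i x y z. \<mu> i (x + y) z = \<mu> i x z + \<mu> i y z" using bil by (simp add: bilinear_map_def)
  have addR: "\<And>i x y z. \<mu> i x (y + z) = \<mu> i x y + \<mu> i x z" using bil by (simp add: bilinear_map_def)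
  have scL: "\<And>i c x y. \<mu> i (sc c x) y = sc c (\<mu> i x y)" using bil by (simp add: bilinear_map_def)
  have scR: "\<And>i c x y. \<mu> i x (sc c y) = sc c (\<mu> i x y)" using bil by (simp add: bilinear_map_def)
  have ass: "\<And>n a b c. (\<Sum>i\<le>n. \<mu> i (\<mu> (n - i) a b) c) = (\<Sum>i\<le>n. \<mu> i a (\<mu> (n - i) b c))"
    using assms(3) by (simp add: formal_deformation_def)
  have E1: "\<And>a b c. \<mu> 1 a b * c + \<mu> 1 (a * b) c = a * \<mu> 1 b c + \<mu> 1 a (b * c)"
  proof -
    fix a b c
    show "\<mu> 1 a b * c + \<mu> 1 (a * b) c = a * \<mu> 1 b c + \<mu> 1 a (b * c)"
      using ass[of 1 a b c] by (simp add: m0)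
  qed
  have E2: "\<And>a b c. \<mu> 2 a b * c + \<mu> 1 (\<mu> 1 a b) c + \<mu> 2 (a * b) c
      = a * \<mu> 2 b c + \<mu> 1 a (\<mu> 1 b c) + \<mu> 2 a (b * c)"
  proof -
    fix a b c
    show "\<mu> 2 a b * c + \<mu> 1 (\<mu> 1 a b) c + \<mu> 2 (a * b) c
      = a * \<mu> 2 b c + \<mu> 1 a (\<mu> 1 b c) + \<mu> 2 a (b * c)"
      using ass[of 2 a b c] by (simp add: m0 numeral_2_eq_2 add.assoc)
  qed
  have H1: "\<And>a b. \<mu> 1 (a * a) b = 0" using assms(4) by simp
  have H2: "\<And>a b. \<mu> 2 (a * a) b = \<mu> 2 b (a * a)"
    using assms(5) by (simp add: antisymmetrization_def)
  define br where "br = antisymmetrization (\<mu> 1)"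
  have brE: "\<And>x y. br x y = \<mu> 1 x y + \<mu> 1 y x" by (simp add: br_def antisymmetrization_def dif)
  have jac: "\<And>x y z. br x (br y z) + br y (br z x) + br z (br x y) = 0"
  proof -
    fix x y z
    have "br x (br y z) + br y (br z x) + br z (br x y) =
      (\<mu> 2 x y * z + \<mu> 1 (\<mu> 1 x y) z + \<mu> 2 (x * y) z + (x * \<mu> 2 y z + \<mu> 1 x (\<mu> 1 y z) + \<mu> 2 x (y * z)))
    + (\<mu> 2 x z * y + \<mu> 1 (\<mu> 1 x z) y + \<mu> 2 (x * z) y + (x * \<mu> 2 z y + \<mu> 1 x (\<mu> 1 z y) + \<mu> 2 x (z * y)))
    + (\<mu> 2 y x * z + \<mu> 1 (\<mu> 1 y x) z + \<mu> 2 (y * x) z + (y * \<mu> 2 x z + \<mu> 1 y (\<mu> 1 x z) + \<mu> 2 y (x * z)))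
    + (\<mu> 2 y z * x + \<mu> 1 (\<mu> 1 y z) x + \<mu> 2 (y * z) x + (y * \<mu> 2 z x + \<mu> 1 y (\<mu> 1 z x) + \<mu> 2 y (z * x)))
    + (\<mu> 2 z x * y + \<mu> 1 (\<mu> 1 z x) y + \<mu> 2 (z * x) y + (z * \<mu> 2 x y + \<mu> 1 z (\<mu> 1 x y) + \<mu> 2 z (x * y)))
    + (\<mu> 2 z y * x + \<mu> 1 (\<mu> 1 z y) x + \<mu> 2 (z * y) x + (z * \<mu> 2 y x + \<mu> 1 z (\<mu> 1 y x) + \<mu> 2 z (y * x)))"
      by (simp add: brE addL addR algebra_simps c2 c2b)
    also have "\<dots> = 0"
      using toz[OF E2[of x y z]] toz[OF E2[of x z y]] toz[OF E2[of y x z]]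
        toz[OF E2[of y z x]] toz[OF E2[of z x y]] toz[OF E2[of z y x]]
      by (simp only: add_0_right)
    finally show "br x (br y z) + br y (br z x) + br z (br x y) = 0" .
  qed
  have leib: "\<And>a b c. br (a * b) c = a * br b c + b * br a c"
  proof -
    fix a b c
    have "br (a * b) c + (a * br b c + b * br a c) = ((\<mu> 1 (a) (b) * (c) + \<mu> 1 ((a) * (b)) (c)) + ((a) * \<mu> 1 (b) (c) + \<mu> 1 (a) ((b) * (c)))) + ((\<mu> 1 (a) (c) * (b) + \<mu> 1 ((a) * (c)) (b)) + ((a) * \<mu> 1 (c) (b) + \<mu> 1 (a) ((c) * (b)))) + ((\<mu> 1 (c) (a) * (b) + \<mu> 1 ((c) * (a)) (b)) + ((c) * \<mu> 1 (a) (b) + \<mu> 1 (c) ((a) * (b))))"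
      by (simp add: brE omega_of_def algebra_simps c2 c2b addL addR)
    also have "\<dots> = 0"
      using toz[OF E1[of "a" "b" "c"]] toz[OF E1[of "a" "c" "b"]] toz[OF E1[of "c" "a" "b"]]
      by (simp only: add_0_right mult_zero_right)
    finally show "br (a * b) c = a * br b c + b * br a c" by (rule fin)
  qed
  have adsq: "\<And>x y. br (omega_of (\<mu> 1) x) y = br x (br x y)"
  proof -
    fix x y
    have "br (omega_of (\<mu> 1) x) y + (br x (br x y)) = ((\<mu> 2 (x) (x) * (y) + \<mu> 1 (\<mu> 1 (x) (x)) (y) + \<mu> 2 ((x) * (x)) (y)) + ((x) * \<mu> 2 (x) (y) + \<mu> 1 (x) (\<mu> 1 (x) (y)) + \<mu> 2 (x) ((x) * (y)))) + ((\<mu> 2 (x) (y) * (x) + \<mu> 1 (\<mu> 1 (x) (y)) (x) + \<mu> 2 ((x) * (y)) (x)) + ((x) * \<mu> 2 (y) (x) + \<mu> 1 (x) (\<mu> 1 (y) (x)) + \<mu> 2 (x) ((y) * (x)))) + ((\<mu> 2 (y) (x) * (x) + \<mu> 1 (\<mu> 1 (y) (x)) (x) + \<mu> 2 ((y) * (x)) (x)) + ((y) * \<mu> 2 (x) (x) + \<mu> 1 (y) (\<mu> 1 (x) (x)) + \<mu> 2 (y) ((x) * (x)))) + (\<mu> 2 (x * x) y + \<mu> 2 y (x * x))"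
      by (simp add: brE omega_of_def algebra_simps c2 c2b addL addR)
    also have "\<dots> = 0"
      using toz[OF E2[of "x" "x" "y"]] toz[OF E2[of "x" "y" "x"]] toz[OF E2[of "y" "x" "x"]] toz[OF H2[of x y]]
      by (simp only: add_0_right mult_zero_right)
    finally show "br (omega_of (\<mu> 1) x) y = br x (br x y)" by (rule fin)
  qed
  have sqmul: "\<And>x y. omega_of (\<mu> 1) (x * y) = x * x * omega_of (\<mu> 1) y + y * y * omega_of (\<mu> 1) x + x * y * br x y"
  proof -
    fix x y
    have "omega_of (\<mu> 1) (x * y) + (x * x * omega_of (\<mu> 1) y + y * y * omega_of (\<mu> 1) x + x * y * br x y) = ((\<mu> 1 (y) (y) * (x * x) + \<mu> 1 ((y) * (y)) (x * x)) + ((y) * \<mu> 1 (y) (x * x) + \<mu> 1 (y) ((y) * (x * x)))) + (y) * ((\<mu> 1 (y) (x) * (x) + \<mu> 1 ((y) * (x)) (x)) + ((y) * \<mu> 1 (x) (x) + \<mu> 1 (y) ((x) * (x)))) + ((\<mu> 1 (y) (x) * (x * y) + \<mu> 1 ((y) * (x)) (x * y)) + ((y) * \<mu> 1 (x) (x * y) + \<mu> 1 (y) ((x) * (x * y)))) + (y) * ((\<mu> 1 (x) (y) * (x) + \<mu> 1 ((x) * (y)) (x)) + ((x) * \<mu> 1 (y) (x) + \<mu> 1 (x) ((y) * (x)))) + \<mu> 1 (y * y) (x * x)"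
      by (simp add: brE omega_of_def algebra_simps c2 c2b addL addR)
    also have "\<dots> = 0"
      using toz[OF E1[of "y" "y" "x * x"]] toz[OF E1[of "y" "x" "x"]] toz[OF E1[of "y" "x" "x * y"]] toz[OF E1[of "x" "y" "x"]] H1[of y "x * x"]
      by (simp only: add_0_right mult_zero_right)
    finally show "omega_of (\<mu> 1) (x * y) = x * x * omega_of (\<mu> 1) y + y * y * omega_of (\<mu> 1) x + x * y * br x y" by (rule fin)
  qed
  have sqadd: "\<And>x y. omega_of (\<mu> 1) (x + y) = omega_of (\<mu> 1) x + omega_of (\<mu> 1) y + br x y"
    by (simp add: brE omega_of_def addL addR algebra_simps)
  have sqsc: "\<And>c x. omega_of (\<mu> 1) (sc c x) = sc (c^2) (omega_of (\<mu> 1) x)"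
    by (simp add: omega_of_def scL scR module.scale_scale[OF md] power2_eq_square)
  have bilbr: "bilinear_map sc br"
    unfolding bilinear_map_def
    by (simp add: brE addL addR scL scR module.scale_right_distrib[OF md] algebra_simps)
  have lie: "lie_bracket sc br"
    unfolding lie_bracket_def using bilbr jac by (simp add: brE c2)
  show ?thesis
    unfolding restricted_poisson_def br_def[symmetric]
    using assms(2) lie leib sqsc adsq sqadd sqmul by blast
qed

end
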